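(* Let $p$ be an even positive integer, $0\le\alpha\le1$, and for positive integers $j$ define $$g(j)=\prod_{i=1}^j\frac{i+\alpha}{i+1}\cdot\frac{p-i}{p-i-1+\alpha}.$$ Then $g(j)\simeq\left(\frac{1}{j+1}\right)^{1-\alpha}$ for all $1\le j\le p/2-1$.
   Context: $f\simeq h$ means there are constants $c_1,c_2>0$, not depending on $p$ or $j$, with $c_1h\le f\le c_2h$. *)

theory Defs
  imports Complex_Main
begin

definition g_fun :: "nat \<Rightarrow> real \<Rightarrow> nat \<Rightarrow> real" where
  "g_fun p \<alpha> j = (\<Prod>i=1..j. ((real i + \<alpha>) / (real i + 1)) *
                                 ((real p - real i) / (real p - real i - 1 + \<alpha>)))"

end

theory Submission
  imports Defs "HOL-Analysis.Analysis"
begin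

lemma powr_bern:
  fixes a b :: real
  assumes "a > 0" "0 \<le> b" "b \<le> 1"
  shows "a powr b \<le> 1 + b * (a - 1)"
proof -
  have "a powr b * 1 powr (1 - b) \<le> b * a + (1 - b) * 1"
    using Youngs_inequality_0[of b "1 - b" a 1] assms by simp
  then show ?thesis by (simp add: algebra_simps)
qed

lemma A_lower:
  fixes \<alpha> :: real
  assumes "0 \<le> \<alpha>" "\<alpha> \<le> 1"
  shows "(1 / (real j + 1)) powr (1 - \<alpha>) \<le> (\<Prod>i=1..j. (real i + \<alpha>) / (real i + 1))"
proof (induction j)
  case 0
  then show ?case by simp
next
  case (Suc j)
  define b where "b = 1 - \<alpha>"
  have b: "0 \<le> b" "b \<le> 1" using assms b_def by auto
  have f: "((real j + 1) / (real j + 2)) powr b \<le> (real (Suc j) + \<alpha>) / (real (Suc j) + 1)"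
  proof -
    have "((real j + 1) / (real j + 2)) powr b \<le> 1 + b * ((real j + 1) / (real j + 2) - 1)"
      using powr_bern[of "(real j + 1) / (real j + 2)" b] b by simp
    also have "\<dots> = (real (Suc j) + \<alpha>) / (real (Suc j) + 1)"
      unfolding b_def by (simp add: field_simps)
    finally show ?thesis .
  qed
  have "(1 / (real (Suc j) + 1)) powr b = ((real j + 1) / (real j + 2) * (1 / (real j + 1))) powr b"
    by (simp add: add.commute)
  also have "\<dots> = ((real j + 1) / (real j + 2)) powr b * (1 / (real j + 1)) powr b"
    by (rule powr_mult; simp)
  also have "\<dots> \<le> (real (Suc j) + \<alpha>) / (real (Suc j) + 1) * (\<Prod>i=1..j. (real i + \<alpha>) / (real i + 1))"
    using Suc.IH f b_def assms by (intro mult_mono) auto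
  also have "\<dots> = (\<Prod>i=1..Suc j. (real i + \<alpha>) / (real i + 1))"
    by (simp add: prod.cl_ivl_Suc)
  finally show ?case unfolding b_def .
qed

lemma A_upper:
  fixes \<alpha> :: real
  assumes "0 \<le> \<alpha>" "\<alpha> \<le> 1"
  shows "(\<Prod>i=1..j. (real i + \<alpha>) / (real i + 1)) \<le> (2 / (real j + 2)) powr (1 - \<alpha>)"
proof (induction j)
  case 0
  then show ?case by simp
next
  case (Suc j)
  define b where "b = 1 - \<alpha>"
  have b: "0 \<le> b" "b \<le> 1" using assms b_def by auto
  have f: "(real (Suc j) + \<alpha>) / (real (Suc j) + 1) \<le> ((real j + 2) / (real j + 3)) powr b"
  proof -
    define x where "x = 1 / (real j + 2)"
    have x: "0 < x" "x \<le> 1/2" unfolding x_def by (auto simp: field_simps)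
    have e1: "(real (Suc j) + \<alpha>) / (real (Suc j) + 1) = 1 - b * x"
      unfolding b_def x_def by (simp add: field_simps)
    have e2: "(real j + 2) / (real j + 3) = 1 / (1 + x)"
      unfolding x_def by (simp add: field_simps)
    have p: "(1 + x) powr b \<le> 1 + b * x"
      using powr_bern[of "1 + x" b] b x by simp
    have bx: "b * x \<le> 1/2" using b x mult_mono[of b 1 x "1/2"] by auto
    have bx0: "0 \<le> b * x" using b x by simp
    have sq: "(1 - b * x) * (1 + b * x) \<le> 1"
    proof -
      have "(1 - b * x) * (1 + b * x) = 1 - (b * x) * (b * x)" by (simp add: algebra_simps)
      moreover have "0 \<le> (b * x) * (b * x)" by simp
      ultimately show ?thesis by linarith
    qed
    have "1 - b * x \<le> 1 / (1 + b * x)"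
      using sq bx0 by (subst pos_le_divide_eq) auto
    also have "\<dots> \<le> 1 / (1 + x) powr b"
    proof (rule divide_left_mono)
      show "0 < (1 + b * x) * (1 + x) powr b" using bx0 x by (intro mult_pos_pos) auto
    qed (use p in auto)
    also have "\<dots> = (1 / (1 + x)) powr b"
      using x by (simp add: powr_divide)
    finally show ?thesis using e1 e2 by simp
  qed
  have eqq: "(real j + 2) / (real j + 3) * (2 / (real j + 2)) = 2 / (real (Suc j) + 2)"
  proof -
    have nz: "real j + 2 \<noteq> 0" by simp
    have "(real j + 2) / (real j + 3) * (2 / (real j + 2)) = ((real j + 2) * 2) / ((real j + 2) * (real j + 3))"
      by (simp add: times_divide_times_eq mult.commute)
    also have "\<dots> = 2 / (real j + 3)"
      by (rule nonzero_mult_divide_mult_cancel_left[OF nz])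
    also have "\<dots> = 2 / (real (Suc j) + 2)" by (simp add: add.commute add.left_commute)
    finally show ?thesis .
  qed
  have "(\<Prod>i=1..Suc j. (real i + \<alpha>) / (real i + 1))
      = (real (Suc j) + \<alpha>) / (real (Suc j) + 1) * (\<Prod>i=1..j. (real i + \<alpha>) / (real i + 1))"
    by (simp add: prod.cl_ivl_Suc)
  also have "\<dots> \<le> ((real j + 2) / (real j + 3)) powr b * (2 / (real j + 2)) powr b"
    using Suc.IH f b_def assms by (intro mult_mono) (auto intro!: prod_nonneg)
  also have "\<dots> = ((real j + 2) / (real j + 3) * (2 / (real j + 2))) powr b"
    by (rule powr_mult[symmetric]; simp)
  also have "\<dots> = (2 / (real (Suc j) + 2)) powr b"
    using eqq by simp
  finally show ?case unfolding b_def .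
qed


lemma cancel_aux: "(a::real) \<noteq> 0 \<Longrightarrow> a / c * (q / a) = q / c"
  by simp

lemma B_bounds:
  fixes \<alpha> :: real
  assumes "0 \<le> \<alpha>" "\<alpha> \<le> 1"
  shows "real j + 1 < real p \<Longrightarrow> 1 \<le> (\<Prod>i=1..j. (real p - real i) / (real p - real i - 1 + \<alpha>))
     \<and> (\<Prod>i=1..j. (real p - real i) / (real p - real i - 1 + \<alpha>)) \<le> (real p - 1) / (real p - 1 - real j)"
proof (induction j)
  case 0
  then show ?case by simp
next
  case (Suc j)
  let ?B = "\<Prod>i=1..j. (real p - real i) / (real p - real i - 1 + \<alpha>)"
  let ?f = "(real p - real (Suc j)) / (real p - real (Suc j) - 1 + \<alpha>)"
  have IH: "1 \<le> ?B" "?B \<le> (real p - 1) / (real p - 1 - real j)" using Suc by auto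
  have d: "real p - real (Suc j) - 1 > 0" using Suc.prems by simp
  have den: "0 < real p - real (Suc j) - 1 + \<alpha>" using d assms by linarith
  have f1: "1 \<le> ?f"
    using den assms by (subst le_divide_eq_1_pos) auto
  have f2: "?f \<le> (real p - 1 - real j) / (real p - real j - 2)"
  proof (rule frac_le)
    show "0 \<le> real p - 1 - real j" using d by simp
    show "real p - real (Suc j) \<le> real p - 1 - real j" by simp
    show "0 < real p - real j - 2" using d by simp
    show "real p - real j - 2 \<le> real p - real (Suc j) - 1 + \<alpha>" using assms by simp
  qed
  have eq: "(\<Prod>i=1..Suc j. (real p - real i) / (real p - real i - 1 + \<alpha>)) = ?f * ?B"
    by (simp add: prod.cl_ivl_Suc)
  have up: "?f * ?B \<le> (real p - 1 - real j) / (real p - real j - 2) * ((real p - 1) / (real p - 1 - real j))"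
    using f1 f2 IH by (intro mult_mono) auto
  have c: "(real p - 1 - real j) / (real p - real j - 2) * ((real p - 1) / (real p - 1 - real j))
     = (real p - 1) / (real p - real j - 2)"
    by (rule cancel_aux) (use d in simp)
  have c2: "real p - real j - 2 = real p - 1 - real (Suc j)" by simp
  have up2: "?f * ?B \<le> (real p - 1) / (real p - 1 - real (Suc j))"
    using up unfolding c unfolding c2 .
  have lo: "1 * 1 \<le> ?f * ?B"
    using f1 IH(1) by (intro mult_mono) auto
  show ?case unfolding eq using up2 lo by simp
qed

lemma main_bound:
  fixes \<alpha> :: real
  assumes "0 \<le> \<alpha>" and "\<alpha> \<le> 1"
    and h: "even p \<and> p > 0 \<and> 1 \<le> j \<and> real j \<le> real p / 2 - 1"
  shows "(1 / (real j + 1)) powr (1 - \<alpha>) \<le> g_fun p \<alpha> j \<and>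
        g_fun p \<alpha> j \<le> 4 * (1 / (real j + 1)) powr (1 - \<alpha>)"
proof (rule conjI)
  let ?A = "\<Prod>i=1..j. (real i + \<alpha>) / (real i + 1)"
  let ?B = "\<Prod>i=1..j. (real p - real i) / (real p - real i - 1 + \<alpha>)"
  have g: "g_fun p \<alpha> j = ?A * ?B"
    unfolding g_fun_def by (rule prod.distrib)
  have jp: "real j + 1 < real p" using h by linarith
  have B1: "1 \<le> ?B" and B2: "?B \<le> (real p - 1) / (real p - 1 - real j)"
    using B_bounds[OF assms(1,2) jp] by auto
  have "(real p - 1) / (real p - 1 - real j) \<le> 2"
    using h by (simp add: field_simps)
  with B2 have B3: "?B \<le> 2" by linarith
  have A1: "(1 / (real j + 1)) powr (1 - \<alpha>) \<le> ?A" by (rule A_lower[OF assms(1,2)])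
  have A2: "?A \<le> (2 / (real j + 2)) powr (1 - \<alpha>)" by (rule A_upper[OF assms(1,2)])
  have "(2 / (real j + 2)) powr (1 - \<alpha>) \<le> (2 * (1 / (real j + 1))) powr (1 - \<alpha>)"
    using assms by (intro powr_mono2) (auto simp: field_simps)
  also have "\<dots> = 2 powr (1 - \<alpha>) * (1 / (real j + 1)) powr (1 - \<alpha>)"
    by (rule powr_mult; simp)
  also have "\<dots> \<le> 2 * (1 / (real j + 1)) powr (1 - \<alpha>)"
  proof -
    have "2 powr (1 - \<alpha>) \<le> 2 powr 1" using assms by (intro powr_mono) auto
    then show ?thesis by (intro mult_right_mono) auto
  qed
  finally have A3: "?A \<le> 2 * (1 / (real j + 1)) powr (1 - \<alpha>)" using A2 by linarith
  have A0: "0 \<le> ?A" using A1 by (smt (verit) powr_ge_zero)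
  show "(1 / (real j + 1)) powr (1 - \<alpha>) \<le> g_fun p \<alpha> j"
    unfolding g using A1 B1 A0 by (smt (verit) mult_left_mono mult_cancel_left1 powr_ge_zero)
  have "g_fun p \<alpha> j \<le> 4 * (1 / (real j + 1)) powr (1 - \<alpha>)"
  proof -
    have "?A * ?B \<le> (2 * (1 / (real j + 1)) powr (1 - \<alpha>)) * 2"
      using A3 B3 A0 B1 by (intro mult_mono) auto
    then show ?thesis unfolding g by simp
  qed
  then show "g_fun p \<alpha> j \<le> 4 * (1 / (real j + 1)) powr (1 - \<alpha>)" .
qed

theorem lemmaC2:
  fixes \<alpha> :: real
  assumes "0 \<le> \<alpha>" and "\<alpha> \<le> 1"
  shows "\<exists>c1 c2. c1 > 0 \<and> c2 > 0 \<and>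
     (\<forall>p j. even p \<and> p > 0 \<and> 1 \<le> j \<and> real j \<le> real p / 2 - 1 \<longrightarrow>
        c1 * (1 / (real j + 1)) powr (1 - \<alpha>) \<le> g_fun p \<alpha> j \<and>
        g_fun p \<alpha> j \<le> c2 * (1 / (real j + 1)) powr (1 - \<alpha>))"
proof -
  have "\<forall>p j. even p \<and> p > 0 \<and> 1 \<le> j \<and> real j \<le> real p / 2 - 1 \<longrightarrow>
        1 * (1 / (real j + 1)) powr (1 - \<alpha>) \<le> g_fun p \<alpha> j \<and>
        g_fun p \<alpha> j \<le> 4 * (1 / (real j + 1)) powr (1 - \<alpha>)"
    using main_bound[OF assms] by simp
  then show ?thesis by (intro exI[of _ "1::real"] exI[of _ "4::real"]) simp
qed

end
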